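(* Let $d$ be a positive integer, and let $T$ be the rooted tree with root $r$ in which every leaf has depth $d$ and every non-leaf vertex has degree $3$. Let $p\in[0,1]$ and let $S$ be a random subset of $V(T)$ containing each vertex independently with probability $p$. Then $$\mathbf{P}\left[w_{(T,S)}(r)<1\right]\leq\frac{p}{2}+\frac{3}{2}e^{-pd}.$$
   Context: For a graph $G$, a set $S\subseteq V(G)$, and vertices $u,v$ with $u\in S$ or $v\in S$, ${\rm dist}_{(G,S)}(u,v)$ is the minimum number of edges of a path $P$ in $G$ between $u$ and $v$ such that $S$ contains exactly one endvertex of $P$ and no internal vertex of $P$, and $\infty$ if no such path exists (so ${\rm dist}_{(G,S)}(u,u)=0$ for $u\in S$). For $u\in V(G)$, $w_{(G,S)}(u)=\sum_{v\in S}(1/2)^{{\rm dist}_{(G,S)}(u,v)-1}$ with $(1/2)^{\infty}=0$. The depth of a vertex in a rooted tree is its distance from the root. *)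

theory Defs
  imports Complex_Main "HOL-Library.Extended_Nat"
begin

definition is_path :: "'a set \<Rightarrow> ('a \<Rightarrow> 'a \<Rightarrow> bool) \<Rightarrow> 'a list \<Rightarrow> bool" where
  "is_path V E xs \<longleftrightarrow> xs \<noteq> [] \<and> set xs \<subseteq> V \<and> distinct xs \<and>
     (\<forall>i. Suc i < length xs \<longrightarrow> E (xs ! i) (xs ! Suc i))"

definition S_path :: "'a set \<Rightarrow> ('a \<Rightarrow> 'a \<Rightarrow> bool) \<Rightarrow> 'a set \<Rightarrow> 'a \<Rightarrow> 'a \<Rightarrow> 'a list \<Rightarrow> bool" where
  "S_path V E S u v xs \<longleftrightarrow> is_path V E xs \<and> hd xs = u \<and> last xs = v \<and>
     card ({hd xs, last xs} \<inter> S) = 1 \<and>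
     (\<forall>i. 0 < i \<and> Suc i < length xs \<longrightarrow> xs ! i \<notin> S)"

text \<open>dist_(G,S)(u,v): minimum number of edges of such a path, \<infinity> if none
(Inf of the empty set of extended naturals is \<infinity>).\<close>

definition distS :: "'a set \<Rightarrow> ('a \<Rightarrow> 'a \<Rightarrow> bool) \<Rightarrow> 'a set \<Rightarrow> 'a \<Rightarrow> 'a \<Rightarrow> enat" where
  "distS V E S u v = Inf {enat (length xs - 1) | xs. S_path V E S u v xs}"

definition wS :: "'a set \<Rightarrow> ('a \<Rightarrow> 'a \<Rightarrow> bool) \<Rightarrow> 'a set \<Rightarrow> 'a \<Rightarrow> real" where
  "wS V E S u = (\<Sum>v\<in>S. (case distS V E S u v of
                          enat n \<Rightarrow> (1/2::real) powr (real n - 1)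
                        | \<infinity> \<Rightarrow> 0))"

text \<open>The rooted tree T_d: vertices are lists (addresses from the root []),
the root has children [0],[1],[2]; every other non-leaf vertex xs has children
xs@[0], xs@[1]; leaves are the lists of length d. Thus all leaves have depth d and
every non-leaf vertex has degree 3.\<close>

definition tree_V :: "nat \<Rightarrow> nat list set" where
  "tree_V d = {xs. length xs \<le> d \<and> (xs \<noteq> [] \<longrightarrow> hd xs < 3) \<and> (\<forall>x\<in>set (tl xs). x < 2)}"

definition tree_E :: "nat list \<Rightarrow> nat list \<Rightarrow> bool" where
  "tree_E xs ys \<longleftrightarrow> (\<exists>a. ys = xs @ [a]) \<or> (\<exists>a. xs = ys @ [a])"

definition tree_root :: "nat list" where
  "tree_root = []"

definition rand_subset_prob :: "'a set \<Rightarrow> real \<Rightarrow> ('a set \<Rightarrow> bool) \<Rightarrow> real" where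
  "rand_subset_prob V p P =
     (\<Sum>S\<in>Pow V. if P S then p ^ card S * (1 - p) ^ (card V - card S) else 0)"

end

theory Submission
  imports Defs
begin

lemma tree_V_sub: "tree_V d \<subseteq> {xs. set xs \<subseteq> {0..<3} \<and> length xs \<le> d}"
proof
  fix xs assume "xs \<in> tree_V d"
  then show "xs \<in> {xs. set xs \<subseteq> {0..<3} \<and> length xs \<le> d}"
    unfolding tree_V_def by (cases xs) auto
qed

lemma finite_tree_V: "finite (tree_V d)"
  by (rule finite_subset[OF tree_V_sub finite_lists_length_le]) auto

lemma take_in_tree_V: "v \<in> tree_V d \<Longrightarrow> take k v \<in> tree_V d"
  unfolding tree_V_def
  by (cases v; cases k) (auto dest: in_set_takeD)

lemma avoid_prob:
  fixes p :: real
  assumes "finite V" "A \<subseteq> V"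
  shows "(\<Sum>S\<in>Pow V. p ^ card S * (1-p) ^ (card V - card S) * (if A \<inter> S = {} then 1 else 0)) = (1-p) ^ card A"
proof -
  have "(\<Prod>x\<in>V. (if x \<in> A then 0 else p) + (1-p)) = (\<Sum>X\<in>Pow V. (\<Prod>x\<in>X. (if x \<in> A then 0 else p)) * (\<Prod>x\<in>V-X. (1-p)))"
    by (rule prod_add[OF assms(1)])
  also have "\<dots> = (\<Sum>S\<in>Pow V. p ^ card S * (1-p) ^ (card V - card S) * (if A \<inter> S = {} then 1 else 0))"
  proof (rule sum.cong[OF refl])
    fix X assume X: "X \<in> Pow V"
    then have fX: "finite X" using assms(1) finite_subset by blast
    have "(\<Prod>x\<in>V-X. (1-p)) = (1-p) ^ (card V - card X)"
      using X assms(1) fX by (simp add: card_Diff_subset)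
    moreover have "(\<Prod>x\<in>X. (if x \<in> A then 0 else p)) = p ^ card X * (if A \<inter> X = {} then 1 else 0)"
    proof (cases "A \<inter> X = {}")
      case True
      then have "(\<Prod>x\<in>X. (if x \<in> A then 0 else p)) = (\<Prod>x\<in>X. p)"
        by (intro prod.cong) auto
      then show ?thesis using True by simp
    next
      case False
      then obtain y where "y \<in> A" "y \<in> X" by blast
      then show ?thesis using False fX by (auto intro: prod_zero)
    qed
    ultimately show "(\<Prod>x\<in>X. (if x \<in> A then 0 else p)) * (\<Prod>x\<in>V-X. (1-p)) = p ^ card X * (1-p) ^ (card V - card X) * (if A \<inter> X = {} then 1 else 0)"
      by simp
  qed
  finally have e: "(\<Prod>x\<in>V. (if x \<in> A then 0 else p) + (1-p)) = (\<Sum>S\<in>Pow V. p ^ card S * (1-p) ^ (card V - card S) * (if A \<inter> S = {} then 1 else 0))" .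
  have "(\<Prod>x\<in>V. (if x \<in> A then 0 else p) + (1-p)) = (\<Prod>x\<in>V. (if x \<in> A then 1-p else 1))"
    by (intro prod.cong) auto
  also have "\<dots> = (\<Prod>x\<in>A. 1-p)"
  proof -
    have VA: "V \<inter> A = A" "A \<inter> V = A" using assms(2) by blast+
    show ?thesis
    using prod.If_cases[OF assms(1), of "\<lambda>x. x \<in> A" "\<lambda>_. 1-p" "\<lambda>_. 1"]
    by (simp add: VA)
  qed
  also have "\<dots> = (1-p) ^ card A" by simp
  finally show ?thesis using e by simp
qed


lemma path_to_first_hit:
  assumes v: "v \<in> tree_V d" and vS: "v \<in> S" and r: "[] \<notin> S"
    and first: "\<forall>j<length v. take j v \<notin> S"
  shows "distS (tree_V d) tree_E S [] v \<le> enat (length v)"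
proof -
  define xs where "xs = map (\<lambda>k. take k v) [0..<Suc (length v)]"
  have len: "length xs = Suc (length v)" by (simp add: xs_def)
  have nth: "\<And>i. i < Suc (length v) \<Longrightarrow> xs ! i = take i v"
    by (simp add: xs_def del: upt_Suc)
  have vne: "v \<noteq> []" using vS r by auto
  have "is_path (tree_V d) tree_E xs"
    unfolding is_path_def
  proof (intro conjI allI impI)
    show "xs \<noteq> []" using len by auto
    show "set xs \<subseteq> tree_V d" using v take_in_tree_V by (auto simp: xs_def)
    have "inj_on (\<lambda>k. take k v) {0..<Suc (length v)}"
      by (rule inj_onI) (metis atLeastLessThan_iff length_take less_Suc_eq_le min.absorb2)
    then show "distinct xs" unfolding xs_def by (simp add: distinct_map del: upt_Suc)
    fix i assume "Suc i < length xs"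
    then have "Suc i < Suc (length v)" using len by simp
    then show "tree_E (xs ! i) (xs ! Suc i)"
      using nth[of i] nth[of "Suc i"] unfolding tree_E_def
      by (auto simp: take_Suc_conv_app_nth)
  qed
  moreover have "hd xs = []" using nth[of 0] len hd_conv_nth[of xs] by force
  moreover have "last xs = v"
    using nth[of "length v"] len last_conv_nth[of xs] by force
  moreover have "card ({hd xs, last xs} \<inter> S) = 1"
  proof -
    have "{[], v} \<inter> S = {v}" using vS r by auto
    then show ?thesis using \<open>hd xs = []\<close> \<open>last xs = v\<close> by simp
  qed
  moreover have "\<forall>i. 0 < i \<and> Suc i < length xs \<longrightarrow> xs ! i \<notin> S"
    using nth first len by auto
  ultimately have "S_path (tree_V d) tree_E S [] v xs" unfolding S_path_def by simp
  then have "enat (length xs - 1) \<in> {enat (length xs - 1) | xs. S_path (tree_V d) tree_E S [] v xs}"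
    by blast
  then have "distS (tree_V d) tree_E S [] v \<le> enat (length xs - 1)"
    unfolding distS_def by (rule Inf_lower)
  then show ?thesis using len by simp
qed

lemma root_dist:
  assumes "[] \<in> S"
  shows "distS (tree_V d) tree_E S [] [] = 0"
proof -
  have "S_path (tree_V d) tree_E S [] [] [[]]"
    using assms unfolding S_path_def is_path_def tree_V_def by auto
  then have "enat (length [[]::nat list] - 1) \<in> {enat (length xs - 1) | xs. S_path (tree_V d) tree_E S [] [] xs}"
    by blast
  then have "distS (tree_V d) tree_E S [] [] \<le> enat (length [[]::nat list] - 1)"
    unfolding distS_def by (rule Inf_lower)
  then have "distS (tree_V d) tree_E S [] [] \<le> 0" by (simp add: zero_enat_def)
  then show ?thesis by simp
qed

definition cterm :: "nat \<Rightarrow> nat list set \<Rightarrow> nat list \<Rightarrow> real" where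
  "cterm d S v = (case distS (tree_V d) tree_E S [] v of enat n \<Rightarrow> (1/2::real) powr (real n - 1) | \<infinity> \<Rightarrow> 0)"

lemma cterm_nonneg: "cterm d S v \<ge> 0"
  unfolding cterm_def by (cases "distS (tree_V d) tree_E S [] v") auto

lemma wS_eq: "wS (tree_V d) tree_E S tree_root = (\<Sum>v\<in>S. cterm d S v)"
  unfolding wS_def cterm_def tree_root_def by simp

lemma cterm_first:
  assumes "v \<in> tree_V d" "v \<in> S" "[] \<notin> S" "\<forall>j<length v. take j v \<notin> S"
  shows "cterm d S v \<ge> 2 / 2 ^ length v"
proof -
  have le: "distS (tree_V d) tree_E S [] v \<le> enat (length v)" by (rule path_to_first_hit[OF assms])
  then obtain n where n: "distS (tree_V d) tree_E S [] v = enat n" "n \<le> length v"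
    by (cases "distS (tree_V d) tree_E S [] v") auto
  have "(1/2::real) powr (real (length v) - 1) \<le> (1/2) powr (real n - 1)"
    by (rule powr_mono') (use n in auto)
  moreover have "(1/2::real) powr (real (length v) - 1) = 2 / 2 ^ length v"
    by (simp add: powr_diff powr_realpow divide_simps)
  ultimately show ?thesis unfolding cterm_def using n by simp
qed

lemma cterm_root:
  assumes "[] \<in> S" shows "cterm d S [] = 2"
proof -
  have e: "distS (tree_V d) tree_E S [] [] = enat 0" using root_dist[OF assms] by (simp only: zero_enat_def)
  show ?thesis unfolding cterm_def e enat.case by (simp add: powr_minus)
qed


definition leaves :: "nat \<Rightarrow> nat list set" where
  "leaves d = {l \<in> tree_V d. length l = d}"

definition Av :: "nat list \<Rightarrow> nat list set" where
  "Av l = (\<lambda>k. take k l) ` {1..length l}"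

lemma finite_leaves: "finite (leaves d)"
  unfolding leaves_def using finite_tree_V by simp

lemma leaves_eq: "d \<ge> 1 \<Longrightarrow> leaves d = (\<lambda>(a,xs). a # xs) ` ({0..<3} \<times> {xs. set xs \<subseteq> {0..<2} \<and> length xs = d - 1})"
proof (rule set_eqI, rule iffI)
  fix x :: "nat list" assume d: "d \<ge> 1" and x: "x \<in> leaves d"
  then have x': "length x = d" "hd x < 3" "\<forall>y\<in>set (tl x). y < 2" "x \<noteq> []"
    unfolding leaves_def tree_V_def by auto
  then have "x = (\<lambda>(a,xs). a # xs) (hd x, tl x)" by simp
  moreover have "(hd x, tl x) \<in> {0..<3} \<times> {xs. set xs \<subseteq> {0..<2} \<and> length xs = d - 1}"
    using x' by auto
  ultimately show "x \<in> (\<lambda>(a,xs). a # xs) ` ({0..<3} \<times> {xs. set xs \<subseteq> {0..<2} \<and> length xs = d - 1})"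
    by blast
next
  fix x :: "nat list" assume d: "d \<ge> 1" and "x \<in> (\<lambda>(a,xs). a # xs) ` ({0..<3} \<times> {xs. set xs \<subseteq> {0..<2} \<and> length xs = d - 1})"
  then show "x \<in> leaves d" unfolding leaves_def tree_V_def by auto
qed

lemma card_leaves: "d \<ge> 1 \<Longrightarrow> card (leaves d) = 3 * 2 ^ (d - 1)"
proof -
  assume d: "d \<ge> 1"
  have "inj_on (\<lambda>(a,xs). a # (xs::nat list)) ({0..<3} \<times> {xs. set xs \<subseteq> {0..<2} \<and> length xs = d - 1})"
    by (auto simp: inj_on_def)
  then have "card (leaves d) = card ({0..<3::nat} \<times> {xs. set xs \<subseteq> {0..<2::nat} \<and> length xs = d - 1})"
    unfolding leaves_eq[OF d] by (rule card_image)
  also have "\<dots> = 3 * 2 ^ (d - 1)"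
    by (simp add: card_cartesian_product card_lists_length_eq)
  finally show ?thesis .
qed

lemma Av_sub: "l \<in> tree_V d \<Longrightarrow> Av l \<subseteq> tree_V d"
  unfolding Av_def using take_in_tree_V by auto

lemma card_Av: "card (Av l) = length l"
proof -
  have "inj_on (\<lambda>k. take k l) {1..length l}"
    by (rule inj_onI) (metis atLeastAtMost_iff length_take min.absorb2)
  then show ?thesis unfolding Av_def by (simp add: card_image)
qed

definition Bset :: "nat \<Rightarrow> nat list \<Rightarrow> nat list set" where
  "Bset d v = {l \<in> leaves d. take (length v) l = v}"

lemma card_Bset:
  assumes "v \<noteq> []"
  shows "card (Bset d v) \<le> 2 ^ (d - length v)"
proof -
  have sub: "Bset d v \<subseteq> (\<lambda>s. v @ s) ` {s. set s \<subseteq> {0..<2} \<and> length s = d - length v}"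
  proof
    fix l assume l: "l \<in> Bset d v"
    then have lV: "l \<in> tree_V d" "length l = d" "take (length v) l = v"
      unfolding Bset_def leaves_def by auto
    have "l = v @ drop (length v) l" using lV(3) by (metis append_take_drop_id)
    moreover have "set (drop (length v) l) \<subseteq> {0..<2}"
    proof -
      have "drop (length v) l = drop (length v - 1) (tl l)"
        using assms by (cases v; cases l) auto
      then have "set (drop (length v) l) \<subseteq> set (tl l)" by (metis set_drop_subset)
      moreover have "set (tl l) \<subseteq> {0..<2}" using lV(1) unfolding tree_V_def by auto
      ultimately show ?thesis by blast
    qed
    moreover have "length (drop (length v) l) = d - length v" using lV by simp
    ultimately show "l \<in> (\<lambda>s. v @ s) ` {s. set s \<subseteq> {0..<2} \<and> length s = d - length v}"
      by blast
  qed
  have "card (Bset d v) \<le> card ((\<lambda>s. v @ s) ` {s. set s \<subseteq> {0..<2::nat} \<and> length s = d - length v})"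
    by (rule card_mono[OF _ sub]) (simp add: finite_lists_length_eq)
  also have "\<dots> \<le> card {s. set s \<subseteq> {0..<2::nat} \<and> length s = d - length v}"
    by (rule card_image_le) (simp add: finite_lists_length_eq)
  also have "\<dots> = 2 ^ (d - length v)" by (simp add: card_lists_length_eq)
  finally show ?thesis .
qed

definition Fset :: "nat list set \<Rightarrow> nat list set" where
  "Fset S = {v \<in> S. \<forall>j<length v. take j v \<notin> S}"

lemma hit_sub:
  assumes r: "[] \<notin> S"
  shows "{l \<in> leaves d. Av l \<inter> S \<noteq> {}} \<subseteq> (\<Union>v\<in>Fset S. Bset d v)"
proof
  fix l assume "l \<in> {l \<in> leaves d. Av l \<inter> S \<noteq> {}}"
  then have l: "l \<in> leaves d" and "Av l \<inter> S \<noteq> {}" by auto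
  then obtain k where k: "1 \<le> k" "k \<le> length l" "take k l \<in> S" unfolding Av_def by auto
  define k0 where "k0 = (LEAST k. take k l \<in> S)"
  have k0S: "take k0 l \<in> S" unfolding k0_def by (rule LeastI[of _ k]) (rule k(3))
  have k0le: "k0 \<le> k" unfolding k0_def by (rule Least_le) (rule k(3))
  have lt: "\<And>j. j < k0 \<Longrightarrow> take j l \<notin> S" unfolding k0_def by (rule not_less_Least)
  define v where "v = take k0 l"
  have lv: "length v = k0" using k0le k(2) by (simp add: v_def)
  have "v \<in> Fset S" unfolding Fset_def
    using k0S lt lv by (auto simp: v_def min_def)
  moreover have "l \<in> Bset d v" unfolding Bset_def using l lv by (simp add: v_def)
  ultimately show "l \<in> (\<Union>v\<in>Fset S. Bset d v)" by blast
qed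

lemma Fset_len: "v \<in> Fset S \<Longrightarrow> [] \<notin> S \<Longrightarrow> v \<noteq> []"
  unfolding Fset_def by auto

lemma main_lower:
  assumes SV: "S \<subseteq> tree_V d" and r: "[] \<notin> S"
  shows "2 * real (card {l \<in> leaves d. Av l \<inter> S \<noteq> {}}) / 2 ^ d \<le> wS (tree_V d) tree_E S tree_root"
proof -
  have fS: "finite S" using SV finite_tree_V finite_subset by blast
  have fF: "finite (Fset S)" using fS unfolding Fset_def by simp
  have FV: "\<And>v. v \<in> Fset S \<Longrightarrow> v \<in> tree_V d" using SV unfolding Fset_def by auto
  have lenv: "\<And>v. v \<in> Fset S \<Longrightarrow> length v \<le> d" using FV unfolding tree_V_def by auto
  have "card {l \<in> leaves d. Av l \<inter> S \<noteq> {}} \<le> card (\<Union>v\<in>Fset S. Bset d v)"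
    by (rule card_mono[OF _ hit_sub[OF r]]) (use fF finite_leaves in \<open>auto simp: Bset_def\<close>)
  also have "\<dots> \<le> (\<Sum>v\<in>Fset S. card (Bset d v))" by (rule card_UN_le[OF fF])
  also have "\<dots> \<le> (\<Sum>v\<in>Fset S. 2 ^ (d - length v))"
    by (rule sum_mono) (rule card_Bset[OF Fset_len[OF _ r]])
  finally have c0: "card {l \<in> leaves d. Av l \<inter> S \<noteq> {}} \<le> (\<Sum>v\<in>Fset S. 2 ^ (d - length v))" .
  have c: "real (card {l \<in> leaves d. Av l \<inter> S \<noteq> {}}) \<le> (\<Sum>v\<in>Fset S. 2 ^ (d - length v))"
  proof -
    have "real (card {l \<in> leaves d. Av l \<inter> S \<noteq> {}}) \<le> real (\<Sum>v\<in>Fset S. 2 ^ (d - length v))"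
      using c0 by (simp only: of_nat_le_iff)
    then show ?thesis by simp
  qed
  have "2 * real (card {l \<in> leaves d. Av l \<inter> S \<noteq> {}}) / 2 ^ d \<le> 2 * (\<Sum>v\<in>Fset S. 2 ^ (d - length v)) / 2 ^ d"
    using c by (simp add: divide_right_mono)
  also have "\<dots> = (\<Sum>v\<in>Fset S. 2 / 2 ^ length v)"
    by (simp add: sum_distrib_left sum_divide_distrib power_diff lenv)
  also have "\<dots> \<le> (\<Sum>v\<in>Fset S. cterm d S v)"
    by (rule sum_mono) (rule cterm_first, auto simp: FV r, auto simp: Fset_def)
  also have "\<dots> \<le> (\<Sum>v\<in>S. cterm d S v)"
    by (rule sum_mono2[OF fS]) (auto simp: Fset_def cterm_nonneg)
  also have "\<dots> = wS (tree_V d) tree_E S tree_root" by (simp add: wS_eq)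
  finally show ?thesis .
qed


lemma pointwise:
  assumes d: "d \<ge> 1" and SV: "S \<subseteq> tree_V d"
  shows "(if wS (tree_V d) tree_E S tree_root < 1 then 1 else 0)
         \<le> (\<Sum>l\<in>leaves d. if Av l \<inter> S = {} then 1 else 0) / (2::real) ^ d"
proof (cases "wS (tree_V d) tree_E S tree_root < 1")
  case False
  then show ?thesis by (simp add: sum_nonneg)
next
  case True
  have fS: "finite S" using SV finite_tree_V finite_subset by blast
  have r: "[] \<notin> S"
  proof
    assume r: "[] \<in> S"
    have "cterm d S [] \<le> (\<Sum>v\<in>S. cterm d S v)"
      by (rule member_le_sum[OF r _ fS]) (simp add: cterm_nonneg)
    then show False using True cterm_root[OF r, of d] by (simp add: wS_eq)
  qed
  define H where "H = {l \<in> leaves d. Av l \<inter> S \<noteq> {}}"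
  define N where "N = {l \<in> leaves d. Av l \<inter> S = {}}"
  have sumN: "(\<Sum>l\<in>leaves d. if Av l \<inter> S = {} then 1 else (0::real)) = real (card N)"
    unfolding N_def by (simp add: sum.If_cases[OF finite_leaves] Int_def)
  have "leaves d = H \<union> N" "H \<inter> N = {}" unfolding H_def N_def by auto
  then have "card (leaves d) = card H + card N"
    using finite_leaves by (metis card_Un_disjoint finite_Un)
  then have "card H + card N = 3 * 2 ^ (d - 1)"
    using card_leaves[OF d] by simp
  then have "real (card H + card N) = real (3 * 2 ^ (d - 1))" by (simp only:)
  then have cH: "real (card H) = 3 * 2 ^ (d - 1) - real (card N)"
    by simp
  have "2 * real (card H) / 2 ^ d < 1"
    using main_lower[OF SV r] True unfolding H_def by linarith
  moreover have "(2::real) ^ d = 2 * 2 ^ (d - 1)" using d by (metis power_Suc Suc_diff_1 less_le_trans zero_less_one)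
  ultimately have "1 < real (card N) / 2 ^ d"
    using cH by (simp add: field_simps)
  then show ?thesis using True sumN by simp
qed

theorem mainTheorem9:
  fixes d :: nat and p :: real
  assumes "d \<ge> 1" and "0 \<le> p" and "p \<le> 1"
  shows "rand_subset_prob (tree_V d) p
           (\<lambda>S. wS (tree_V d) tree_E S tree_root < 1)
         \<le> p / 2 + 3 / 2 * exp (- p * real d)"
proof -
  define V where "V = tree_V d"
  define wt where "wt (S::nat list set) = p ^ card S * (1-p) ^ (card V - card S)" for S
  define ind where "ind l (S::nat list set) = (if Av l \<inter> S = {} then 1 else (0::real))" for l S
  have wt0: "\<And>S. wt S \<ge> 0" unfolding wt_def using assms by simp
  have "rand_subset_prob (tree_V d) p (\<lambda>S. wS (tree_V d) tree_E S tree_root < 1)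
      = (\<Sum>S\<in>Pow V. wt S * (if wS (tree_V d) tree_E S tree_root < 1 then 1 else 0))"
    unfolding rand_subset_prob_def V_def wt_def by (intro sum.cong) auto
  also have "\<dots> \<le> (\<Sum>S\<in>Pow V. wt S * ((\<Sum>l\<in>leaves d. ind l S) / 2 ^ d))"
    by (rule sum_mono, rule mult_left_mono) (use pointwise[OF assms(1)] wt0 in \<open>auto simp: V_def ind_def\<close>)
  also have "\<dots> = (\<Sum>l\<in>leaves d. (\<Sum>S\<in>Pow V. wt S * ind l S)) / 2 ^ d"
    by (simp add: sum_divide_distrib sum_distrib_left sum.swap[of _ "Pow V"])
  also have "\<dots> = (\<Sum>l\<in>leaves d. (1-p) ^ d) / 2 ^ d"
  proof -
    have "\<And>l. l \<in> leaves d \<Longrightarrow> (\<Sum>S\<in>Pow V. wt S * ind l S) = (1-p) ^ d"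
    proof -
      fix l assume l: "l \<in> leaves d"
      have "(\<Sum>S\<in>Pow V. wt S * ind l S) = (1-p) ^ card (Av l)"
        unfolding wt_def ind_def V_def
        by (rule avoid_prob[OF finite_tree_V Av_sub]) (use l in \<open>simp add: leaves_def\<close>)
      then show "(\<Sum>S\<in>Pow V. wt S * ind l S) = (1-p) ^ d"
        using l by (simp add: card_Av leaves_def)
    qed
    then show ?thesis by simp
  qed
  also have "\<dots> = 3 / 2 * (1-p) ^ d"
  proof -
    have "(2::real) ^ d = 2 * 2 ^ (d - 1)" using assms(1) by (metis power_Suc Suc_diff_1 less_le_trans zero_less_one)
    then show ?thesis using card_leaves[OF assms(1)] by simp
  qed
  also have "\<dots> \<le> 3 / 2 * exp (- p * real d)"
  proof -
    have "(1-p) ^ d \<le> exp (-p) ^ d"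
      by (rule power_mono) (use assms in \<open>auto simp: exp_ge_add_one_self[of "-p", simplified]\<close>)
    also have "\<dots> = exp (- p * real d)" by (simp add: exp_of_nat_mult[symmetric] mult.commute)
    finally show ?thesis by simp
  qed
  also have "\<dots> \<le> p / 2 + 3 / 2 * exp (- p * real d)" using assms by simp
  finally show ?thesis .
qed

end
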